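(* Let $S$ be an intra-regular $\Gamma$-AG$^{**}$-groupoid. Then for all two-sided $\Gamma$-ideals $I,J$ of $S$, $I\Gamma J=I\cap J$.
   Context: Let $S$ and $\Gamma$ be nonempty sets with a map $S\times\Gamma\times S\to S$, $(x,\gamma,y)\mapsto x\gamma y$. $S$ is a $\Gamma$-AG-groupoid if $(x\gamma y)\delta z=(z\gamma y)\delta x$ for all $x,y,z\in S$, $\gamma,\delta\in\Gamma$; it is a $\Gamma$-AG$^{**}$-groupoid if moreover $a\alpha(b\beta c)=b\alpha(a\beta c)$ for all $a,b,c\in S$, $\alpha,\beta\in\Gamma$. For subsets $A,B\subseteq S$, $A\Gamma B=\{a\gamma b: a\in A,\gamma\in\Gamma,b\in B\}$. $S$ is intra-regular if for every $a\in S$ there exist $x,y\in S$ and $\beta,\gamma,\delta\in\Gamma$ with $a=(x\beta(a\delta a))\gamma y$. A nonempty subset $A$ is a two-sided $\Gamma$-ideal if $S\Gamma A\subseteq A$ and $A\Gamma S\subseteq A$. *)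

theory Defs
  imports Main
begin

text \<open>S and Gamma are modelled as (nonempty) types 's and 'g; the ternary
operation is f :: 's => 'g => 's => 's, with f x g y standing for x g y.\<close>

definition gamma_AG_groupoid :: "('s \<Rightarrow> 'g \<Rightarrow> 's \<Rightarrow> 's) \<Rightarrow> bool" where
  "gamma_AG_groupoid f \<longleftrightarrow>
     (\<forall>x y z \<gamma> \<delta>. f (f x \<gamma> y) \<delta> z = f (f z \<gamma> y) \<delta> x)"

definition gamma_AG2_groupoid :: "('s \<Rightarrow> 'g \<Rightarrow> 's \<Rightarrow> 's) \<Rightarrow> bool" where
  "gamma_AG2_groupoid f \<longleftrightarrow> gamma_AG_groupoid f \<and>
     (\<forall>a b c \<alpha> \<beta>. f a \<alpha> (f b \<beta> c) = f b \<alpha> (f a \<beta> c))"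

definition gprod :: "('s \<Rightarrow> 'g \<Rightarrow> 's \<Rightarrow> 's) \<Rightarrow> 's set \<Rightarrow> 's set \<Rightarrow> 's set" where
  "gprod f A B = {f a \<gamma> b | a \<gamma> b. a \<in> A \<and> b \<in> B}"

definition intra_regular :: "('s \<Rightarrow> 'g \<Rightarrow> 's \<Rightarrow> 's) \<Rightarrow> bool" where
  "intra_regular f \<longleftrightarrow>
     (\<forall>a. \<exists>x y \<beta> \<gamma> \<delta>. a = f (f x \<beta> (f a \<delta> a)) \<gamma> y)"

definition two_sided_gamma_ideal :: "('s \<Rightarrow> 'g \<Rightarrow> 's \<Rightarrow> 's) \<Rightarrow> 's set \<Rightarrow> bool" where
  "two_sided_gamma_ideal f A \<longleftrightarrow> A \<noteq> {} \<and>
     gprod f UNIV A \<subseteq> A \<and> gprod f A UNIV \<subseteq> A"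

end

theory Submission
  imports Defs
begin

theorem mainTheorem11:
  fixes f :: "'s \<Rightarrow> 'g \<Rightarrow> 's \<Rightarrow> 's"
  assumes "gamma_AG2_groupoid f" and "intra_regular f"
    and "two_sided_gamma_ideal f I" and "two_sided_gamma_ideal f J"
  shows "gprod f I J = I \<inter> J"
proof
  have IL: "\<And>u g v. v \<in> I \<Longrightarrow> f u g v \<in> I" and IR: "\<And>u g v. u \<in> I \<Longrightarrow> f u g v \<in> I"
    and JL: "\<And>u g v. v \<in> J \<Longrightarrow> f u g v \<in> J" and JR: "\<And>u g v. u \<in> J \<Longrightarrow> f u g v \<in> J"
    using assms(3,4) unfolding two_sided_gamma_ideal_def gprod_def by blast+
  show "gprod f I J \<subseteq> I \<inter> J" unfolding gprod_def using IR JL by blast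
  show "I \<inter> J \<subseteq> gprod f I J"
  proof
    fix a assume a: "a \<in> I \<inter> J"
    obtain x y \<beta> \<gamma> \<delta> where e: "a = f (f x \<beta> (f a \<delta> a)) \<gamma> y"
      using assms(2) unfolding intra_regular_def by blast
    have c: "f x \<beta> (f a \<delta> a) = f a \<beta> (f x \<delta> a)"
      using assms(1) unfolding gamma_AG2_groupoid_def by blast
    have d: "f (f a \<beta> (f x \<delta> a)) \<gamma> y = f (f y \<beta> (f x \<delta> a)) \<gamma> a"
      using assms(1) unfolding gamma_AG2_groupoid_def gamma_AG_groupoid_def by blast
    have "a = f (f y \<beta> (f x \<delta> a)) \<gamma> a" using e c d by simp
    moreover have "f y \<beta> (f x \<delta> a) \<in> I" using a IL by blast
    ultimately show "a \<in> gprod f I J" unfolding gprod_def using a by blast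
  qed
qed

end
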